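(* Let $(Y, S, A, \mathbf{X}^{P}, \mathbf{X}^{S})$ be jointly distributed random variables describing a unit drawn from an infinite population, where $Y$ is a real-valued outcome with $\mathbb{E}|Y|<\infty$, $S \in \{0,1\}$ is the survey inclusion indicator, $A \in \{1,\ldots,J\}$ is the area indicator, $\mathbf{X}^{P}$ (taking values in $\mathcal{X}^{P}$) are population covariates and $\mathbf{X}^{S}$ (taking values in $\mathcal{X}^{S}$) are survey-only covariates. Fix $j \in \{1,\ldots,J\}$ with $\Pr(A=j)>0$. Suppose: (Sampling ignorability) (a) $Y \perp\!\!\!\perp S \mid \mathbf{X}^{P}, A$, and (b) $0 < \Pr(S=1 \mid \mathbf{X}^{P}, A) < 1$ for all values of $\mathbf{X}^{P} \in \mathcal{X}^{P}$; (Area ignorability) (a) $Y \perp\!\!\!\perp A \mid \mathbf{X}^{P}, \mathbf{X}^{S}, S=1$, and (b) $0 < \Pr(A=j \mid \mathbf{X}^{P}, \mathbf{X}^{S}, S=1) < 1$ for all $(\mathbf{X}^{P}, \mathbf{X}^{S}) \in \mathcal{X}^{P}\times\mathcal{X}^{S}$. Then the area mean $\tau_j = \mathbb{E}[Y \mid A=j]$ is nonparametrically identified as $$\tau_j = \mathbb{E}\left\{ \frac{\mathbf{1}\{S=1\}}{\Pr(A=j)} \cdot \frac{\Pr(A=j \mid \mathbf{X}^{P}, \mathbf{X}^{S}, S=1)}{\Pr(A=j \mid \mathbf{X}^{P}, S=1)} \cdot \frac{\Pr(A=j \mid \mathbf{X}^{P})}{\Pr(S=1 \mid \mathbf{X}^{P})}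 \, Y \right\}.$$
   Context: Notation: $\perp\!\!\!\perp$ denotes conditional independence; $\mathbf{1}\{\cdot\}$ is the indicator function. The estimand for area $j$ is $\tau_j = \mathbb{E}[Y\mid A=j]$, the population mean of the outcome among units in area $j$. *)

theory Defs
  imports "HOL-Probability.Probability"
begin

definition sigma_gen :: "'a measure \<Rightarrow> ('a \<Rightarrow> 'b) \<Rightarrow> 'b measure \<Rightarrow> 'a measure" where
  "sigma_gen M X N = vimage_algebra (space M) X N"

definition cond_prob :: "'a measure \<Rightarrow> 'a measure \<Rightarrow> 'a set \<Rightarrow> ('a \<Rightarrow> real)" where
  "cond_prob M F E = real_cond_exp M F (indicator E)"

text \<open>conditional independence of the sigma-algebras G1 and G2 given F, on the event E
  (E is assumed to be F-measurable; E = space M gives ordinary conditional independence)\<close>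
definition cond_indep_on :: "'a measure \<Rightarrow> 'a set \<Rightarrow> 'a measure \<Rightarrow> 'a measure \<Rightarrow> 'a measure \<Rightarrow> bool" where
  "cond_indep_on M E F G1 G2 \<longleftrightarrow>
     (\<forall>B1\<in>sets G1. \<forall>B2\<in>sets G2. AE \<omega> in M. \<omega> \<in> E \<longrightarrow>
        cond_prob M F (B1 \<inter> B2) \<omega> = cond_prob M F B1 \<omega> * cond_prob M F B2 \<omega>)"

definition event_mean :: "'a measure \<Rightarrow> ('a \<Rightarrow> real) \<Rightarrow> 'a set \<Rightarrow> real" where
  "event_mean M Y E = (\<integral>\<omega>. indicator E \<omega> * Y \<omega> \<partial>M) / measure M E"

end

theory Submission
  imports Defs
begin

lemma subalg_vimage:
  assumes "X \<in> measurable M N"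
  shows "subalgebra M (vimage_algebra (space M) X N)"
  using sets_image_in_sets[OF refl assms] by (simp add: subalgebra_def)

lemma sfs_vimage:
  assumes "prob_space M" "X \<in> measurable M N"
  shows "sigma_finite_subalgebra M (vimage_algebra (space M) X N)"
proof -
  interpret prob_space M by fact
  have "finite_measure_subalgebra M (vimage_algebra (space M) X N)"
    by unfold_locales (rule subalg_vimage[OF assms(2)])
  then show ?thesis by (rule finite_measure_subalgebra_is_sigma_finite)
qed

lemma cp_nn:
  assumes "prob_space M" "sigma_finite_subalgebra M F" "T \<in> sets M"
  shows "AE x in M. ennreal (cond_prob M F T x) = nn_cond_exp M F (\<lambda>x. ennreal (indicator T x)) x"
proof -
  interpret prob_space M by fact
  interpret F: sigma_finite_subalgebra M F by fact
  have z: "(\<lambda>x. ennreal (- indicator T x :: real)) = (\<lambda>x. 0)"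
    by (auto simp: indicator_def fun_eq_iff ennreal_neg)
  have ae0: "AE x in M. nn_cond_exp M F (\<lambda>x. 0) x = 0"
    using F.nn_cond_exp_F_meas[of "\<lambda>x. 0"] by auto
  have "(\<integral>\<^sup>+ x. 1 * nn_cond_exp M F (\<lambda>x. ennreal (indicator T x)) x \<partial>M)
       = (\<integral>\<^sup>+ x. 1 * ennreal (indicator T x) \<partial>M)"
    by (rule F.nn_cond_exp_intg) (use assms in auto)
  also have "\<dots> = emeasure M T" using assms(3) by (simp add: ennreal_indicator)
  finally have "(\<integral>\<^sup>+ x. nn_cond_exp M F (\<lambda>x. ennreal (indicator T x)) x \<partial>M) \<noteq> \<infinity>"
    by simp
  then have fin: "AE x in M. nn_cond_exp M F (\<lambda>x. ennreal (indicator T x)) x \<noteq> \<infinity>"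
    by (intro nn_integral_PInf_AE) auto
  show ?thesis using ae0 fin
    by eventually_elim (auto simp: cond_prob_def real_cond_exp_def z ennreal_enn2real_if)
qed

lemma key_nn:
  assumes "prob_space M" "sigma_finite_subalgebra M F" "T \<in> sets M"
    and hm: "h \<in> borel_measurable F" and hp: "AE x in M. 0 \<le> h x"
  shows "(\<integral>\<^sup>+ x. ennreal (h x * cond_prob M F T x) \<partial>M) = (\<integral>\<^sup>+ x. ennreal (h x * indicator T x) \<partial>M)"
proof -
  interpret F: sigma_finite_subalgebra M F by fact
  have "(\<integral>\<^sup>+ x. ennreal (h x * cond_prob M F T x) \<partial>M)
      = (\<integral>\<^sup>+ x. ennreal (h x) * nn_cond_exp M F (\<lambda>x. ennreal (indicator T x)) x \<partial>M)"
    using cp_nn[OF assms(1-3)] hp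
    by (intro nn_integral_cong_AE) (auto simp: ennreal_mult')
  also have "\<dots> = (\<integral>\<^sup>+ x. ennreal (h x) * ennreal (indicator T x) \<partial>M)"
    by (rule F.nn_cond_exp_intg) (use assms in auto)
  also have "\<dots> = (\<integral>\<^sup>+ x. ennreal (h x * indicator T x) \<partial>M)"
    using hp by (intro nn_integral_cong_AE) (auto simp: ennreal_mult')
  finally show ?thesis .
qed


lemma ind_int:
  assumes "prob_space M" "T \<in> sets M"
  shows "integrable M (indicator T :: 'a \<Rightarrow> real)"
proof -
  interpret prob_space M by fact
  show ?thesis by (rule integrable_const_bound[where B=1]) (use assms(2) in auto)
qed

lemma ind_prod_int:
  assumes "prob_space M" "A \<in> sets M" "B \<in> sets M"
  shows "integrable M (\<lambda>x. indicator A x * indicator B x :: real)"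
proof -
  interpret prob_space M by fact
  show ?thesis by (rule integrable_const_bound[where B=1]) (use assms(2,3) in \<open>auto simp: indicator_def\<close>)
qed

lemma cp_mono:
  assumes "prob_space M" "sigma_finite_subalgebra M F" "T \<in> sets M" "U \<in> sets M" "T \<subseteq> U"
  shows "AE x in M. 0 \<le> cond_prob M F T x \<and> cond_prob M F T x \<le> cond_prob M F U x"
proof -
  interpret prob_space M by fact
  interpret F: sigma_finite_subalgebra M F by fact
  have "AE x in M. 0 \<le> cond_prob M F T x"
    unfolding cond_prob_def by (rule F.real_cond_exp_pos) (use assms in auto)
  moreover have "AE x in M. cond_prob M F T x \<le> cond_prob M F U x"
    unfolding cond_prob_def
    by (rule F.real_cond_exp_mono) (use assms ind_int in \<open>auto simp: indicator_def\<close>)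
  ultimately show ?thesis by auto
qed

lemma sub_of_meas:
  assumes "X \<in> measurable H N" "space H = space M"
  shows "subalgebra H (vimage_algebra (space M) X N)"
  using sets_image_in_sets[OF assms(2) assms(1)] assms(2) by (simp add: subalgebra_def)

lemma cp_meas:
  "cond_prob M F T \<in> borel_measurable F"
  unfolding cond_prob_def by simp

lemma cp_meas2 [measurable]:
  "cond_prob M F T \<in> borel_measurable M"
  unfolding cond_prob_def by simp

lemma restr:
  fixes X :: "'a \<Rightarrow> 'p" and D :: "'a \<Rightarrow> nat" and d :: nat
  assumes P: "prob_space M" and Xm: "X \<in> measurable M MX"
    and Dm: "D \<in> measurable M (count_space UNIV)" and T: "T \<in> sets M"
  defines "c \<equiv> {\<omega>\<in>space M. D \<omega> = d}"
    and "G \<equiv> sigma_gen M (\<lambda>\<omega>. (X \<omega>, D \<omega>)) (MX \<Otimes>\<^sub>M count_space UNIV)"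
    and "F \<equiv> sigma_gen M X MX"
  shows "AE \<omega> in M. \<omega> \<in> c \<longrightarrow> cond_prob M G T \<omega> = cond_prob M F (T \<inter> c) \<omega> / cond_prob M F c \<omega>"
proof -
  interpret prob_space M by fact
  have XDm: "(\<lambda>\<omega>. (X \<omega>, D \<omega>)) \<in> measurable M (MX \<Otimes>\<^sub>M count_space UNIV)"
    using Xm Dm by measurable
  have sG: "sigma_finite_subalgebra M G" unfolding G_def sigma_gen_def by (rule sfs_vimage[OF P XDm])
  have sF: "sigma_finite_subalgebra M F" unfolding F_def sigma_gen_def by (rule sfs_vimage[OF P Xm])
  interpret G: sigma_finite_subalgebra M G by fact
  interpret F: sigma_finite_subalgebra M F by fact
  have XF: "X -` Q \<inter> space M \<in> sets F" if "Q \<in> sets MX" for Q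
    unfolding F_def sigma_gen_def by (rule in_vimage_algebra[OF that])
  have cG: "c \<in> sets G"
  proof -
    have ceq: "c = (\<lambda>\<omega>. (X \<omega>, D \<omega>)) -` (space MX \<times> {d}) \<inter> space M"
      using measurable_space[OF Xm] by (auto simp: c_def)
    have "space MX \<times> {d} \<in> sets (MX \<Otimes>\<^sub>M count_space UNIV)" by (rule pair_measureI) auto
    then show ?thesis unfolding G_def sigma_gen_def ceq by (rule in_vimage_algebra)
  qed
  have cM: "c \<in> sets M" unfolding c_def using Dm by measurable
  have TcM: "T \<inter> c \<in> sets M" using T cM by auto
  define r where "r = (\<lambda>\<omega>. cond_prob M F (T \<inter> c) \<omega> / cond_prob M F c \<omega>)"
  have rF: "r \<in> borel_measurable F" unfolding r_def using cp_meas by measurable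
  have rM: "r \<in> borel_measurable M" unfolding r_def using cp_meas2 by measurable
  have mono: "AE x in M. 0 \<le> cond_prob M F (T \<inter> c) x \<and> cond_prob M F (T \<inter> c) x \<le> cond_prob M F c x"
    by (rule cp_mono[OF P sF TcM cM]) auto
  have r01: "AE x in M. 0 \<le> r x \<and> r x \<le> 1"
    using mono by eventually_elim (auto simp: r_def divide_le_eq_1)
  have rc: "AE x in M. r x * cond_prob M F c x = cond_prob M F (T \<inter> c) x"
    using mono by eventually_elim (auto simp: r_def)
  have subGM: "sets G \<subseteq> sets M" using G.subalg by (simp add: subalgebra_def)
  have subFM: "sets F \<subseteq> sets M" using F.subalg by (simp add: subalgebra_def)
  have claim: "AE x in M. real_cond_exp M G (indicator (T \<inter> c)) x = indicator c x * r x"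
  proof (rule G.real_cond_exp_charact)
    show "integrable M (indicator (T \<inter> c) :: 'a \<Rightarrow> real)" by (rule ind_int[OF P TcM])
    show "integrable M (\<lambda>x. indicator c x * r x)"
      by (rule integrable_const_bound[where B=1]) (use r01 cM rM in \<open>auto simp: indicator_def\<close>)
    show "(\<lambda>x. indicator c x * r x) \<in> borel_measurable G"
    proof -
      have "(\<lambda>\<omega>. (X \<omega>, D \<omega>)) \<in> measurable G (MX \<Otimes>\<^sub>M count_space UNIV)"
        unfolding G_def sigma_gen_def
        by (rule measurable_vimage_algebra1) (use measurable_space[OF XDm] in auto)
      then have "(\<lambda>\<omega>. fst (X \<omega>, D \<omega>)) \<in> measurable G MX" by measurable
      then have XG: "X \<in> measurable G MX" by simp
      have "subalgebra G F" unfolding F_def sigma_gen_def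
        by (rule sub_of_meas[OF XG]) (simp add: G_def sigma_gen_def)
      then have "r \<in> borel_measurable G" by (rule measurable_from_subalg[OF _ rF])
      then show ?thesis using cG by measurable
    qed
    fix C assume CG: "C \<in> sets G"
    obtain Q where Q: "Q \<in> sets (MX \<Otimes>\<^sub>M count_space UNIV)" and C: "C = (\<lambda>\<omega>. (X \<omega>, D \<omega>)) -` Q \<inter> space M"
      using CG measurable_space[OF XDm] unfolding G_def sigma_gen_def
      by (auto simp: sets_vimage_algebra2)
    define Q' where "Q' = (\<lambda>x. (x, d)) -` Q \<inter> space MX"
    have Q': "Q' \<in> sets MX" unfolding Q'_def
      by (rule measurable_sets[OF _ Q]) simp
    define C' where "C' = X -` Q' \<inter> space M"
    have C'F: "C' \<in> sets F" unfolding C'_def by (rule XF[OF Q'])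
    have Cc: "\<And>x. indicator C x * indicator c x = (indicator C' x * indicator c x :: real)"
      using measurable_space[OF Xm] by (auto simp: indicator_def C C'_def Q'_def c_def)
    have "(\<integral>x\<in>C. indicator (T \<inter> c) x \<partial>M) = (\<integral>x. indicator C' x * indicator (T \<inter> c) x \<partial>M :: real)"
      unfolding set_lebesgue_integral_def using Cc
      by (intro Bochner_Integration.integral_cong) (auto simp: indicator_def split: if_splits)
    also have "\<dots> = (\<integral>x. indicator C' x * cond_prob M F (T \<inter> c) x \<partial>M)"
      unfolding cond_prob_def
      by (rule F.real_cond_exp_intg(2)[symmetric]) (use C'F TcM subFM ind_prod_int[OF P, of C' "T \<inter> c"] in auto)
    also have "\<dots> = (\<integral>x. (indicator C' x * r x) * cond_prob M F c x \<partial>M)"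
    proof (rule integral_cong_AE)
      have C'M [measurable]: "C' \<in> sets M" using C'F subFM by auto
      note rM[measurable]
      show "(\<lambda>x. indicator C' x * cond_prob M F (T \<inter> c) x) \<in> borel_measurable M" by measurable
      show "(\<lambda>x. indicator C' x * r x * cond_prob M F c x) \<in> borel_measurable M" by measurable
    qed (use rc in auto)
    also have "\<dots> = (\<integral>x. (indicator C' x * r x) * indicator c x \<partial>M)"
      unfolding cond_prob_def
    proof (rule F.real_cond_exp_intg(2))
      show "integrable M (\<lambda>x. indicator C' x * r x * indicator c x)"
        by (rule integrable_const_bound[where B=1]) (use r01 cM rM C'F subFM in \<open>auto simp: indicator_def\<close>)
    qed (use C'F rF cM in auto)
    also have "\<dots> = (\<integral>x\<in>C. indicator c x * r x \<partial>M)"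
      unfolding set_lebesgue_integral_def using Cc
      by (intro Bochner_Integration.integral_cong) (auto simp: indicator_def split: if_splits)
    finally show "(\<integral>x\<in>C. indicator (T \<inter> c) x \<partial>M) = (\<integral>x\<in>C. indicator c x * r x \<partial>M)" .
  qed
  have mult: "AE x in M. real_cond_exp M G (\<lambda>x. indicator c x * indicator T x) x = indicator c x * real_cond_exp M G (indicator T) x"
    by (rule G.real_cond_exp_mult) (use cG T cM ind_prod_int[OF P cM T] in auto)
  have eqf: "(\<lambda>x. indicator c x * indicator T x) = (indicator (T \<inter> c) :: 'a \<Rightarrow> real)"
    by (auto simp: indicator_def fun_eq_iff)
  show ?thesis using claim mult
    by eventually_elim (auto simp: eqf cond_prob_def r_def)
qed


lemma final_step:
  fixes Y f g :: "'a \<Rightarrow> real"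
  assumes Ym[measurable]: "Y \<in> borel_measurable M"
    and fm[measurable]: "f \<in> borel_measurable M" and gm[measurable]: "g \<in> borel_measurable M"
    and fp: "AE x in M. 0 \<le> f x" and gp: "AE x in M. 0 \<le> g x"
    and eq: "\<And>B. B \<in> sets borel \<Longrightarrow>
      (\<integral>\<^sup>+ x. ennreal (f x * indicator (Y -` B \<inter> space M) x) \<partial>M)
      = (\<integral>\<^sup>+ x. ennreal (g x * indicator (Y -` B \<inter> space M) x) \<partial>M)"
  shows "(\<integral>x. f x * Y x \<partial>M) = (\<integral>x. g x * Y x \<partial>M)"
proof -
  have em: "emeasure (distr (density M f) borel Y) B = (\<integral>\<^sup>+ x. ennreal (f x * indicator (Y -` B \<inter> space M) x) \<partial>M)"
    if "B \<in> sets borel" and [measurable]: "f \<in> borel_measurable M" "AE x in M. 0 \<le> f x" for B f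
  proof -
    have "emeasure (distr (density M f) borel Y) B = emeasure (density M f) (Y -` B \<inter> space M)"
      by (subst emeasure_distr) (use that in auto)
    also have "\<dots> = (\<integral>\<^sup>+ x\<in>(Y -` B \<inter> space M). ennreal (f x) \<partial>M)"
      by (rule emeasure_density) (use that in auto)
    also have "\<dots> = (\<integral>\<^sup>+ x. ennreal (f x * indicator (Y -` B \<inter> space M) x) \<partial>M)"
      using that(3) by (intro nn_integral_cong_AE) (auto simp: ennreal_mult' ennreal_indicator)
    finally show ?thesis .
  qed
  have "distr (density M f) borel Y = distr (density M g) borel Y"
    by (rule measure_eqI) (auto simp: em fp gp eq)
  then have "(\<integral>y. y \<partial>distr (density M f) borel Y) = (\<integral>y. y \<partial>distr (density M g) borel Y)" by simp
  moreover have "(\<integral>y. y \<partial>distr (density M h) borel Y) = (\<integral>x. h x * Y x \<partial>M)"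
    if [measurable]: "h \<in> borel_measurable M" "AE x in M. 0 \<le> h x" for h
  proof -
    have "(\<integral>y. y \<partial>distr (density M h) borel Y) = (\<integral>x. Y x \<partial>density M h)"
      by (rule integral_distr) auto
    also have "\<dots> = (\<integral>x. h x *\<^sub>R Y x \<partial>M)"
      by (rule integral_density) (use that in auto)
    finally show ?thesis by simp
  qed
  ultimately show ?thesis using fp gp by simp
qed


lemma alg1:
  fixes e r q p :: real
  assumes "0 \<le> r" "r \<le> q"
  shows "e / (r / q) * (p / q) = p / r * e"
proof (cases "q = 0")
  case True then have "r = 0" using assms by simp
  with True show ?thesis by simp
next
  case False then show ?thesis by (cases "r = 0") (auto simp: field_simps)
qed

lemma cong_real:
  "AE x in M. f x = g x \<Longrightarrow> (\<integral>\<^sup>+ x. ennreal (f x) \<partial>M) = (\<integral>\<^sup>+ x. ennreal (g x) \<partial>M)"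
  by (rule nn_integral_cong_AE) auto

lemma meas_gen:
  assumes "W \<in> measurable M N" "g \<in> measurable N K"
  shows "(\<lambda>\<omega>. g (W \<omega>)) \<in> measurable (sigma_gen M W N) K"
  unfolding sigma_gen_def
  by (rule measurable_compose[OF measurable_vimage_algebra1 assms(2)]) (use measurable_space[OF assms(1)] in auto)

lemma sfs_gen:
  assumes "prob_space M" "W \<in> measurable M N"
  shows "sigma_finite_subalgebra M (sigma_gen M W N)"
  unfolding sigma_gen_def by (rule sfs_vimage[OF assms])

lemma sub_gen:
  assumes "X \<in> measurable H N" "space H = space M"
  shows "subalgebra H (sigma_gen M X N)"
  unfolding sigma_gen_def by (rule sub_of_meas[OF assms])

lemma space_gen[simp]: "space (sigma_gen M W N) = space M"
  unfolding sigma_gen_def by simp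

theorem proposition1:
  fixes M :: "'a measure"
    and Y :: "'a \<Rightarrow> real" and S :: "'a \<Rightarrow> nat" and A :: "'a \<Rightarrow> nat"
    and XP :: "'a \<Rightarrow> 'p" and XS :: "'a \<Rightarrow> 's"
    and MP :: "'p measure" and MS :: "'s measure"
    and J j :: nat
  assumes "prob_space M"
    and "Y \<in> borel_measurable M" and "integrable M Y"
    and "S \<in> measurable M (count_space UNIV)" and "\<forall>\<omega>\<in>space M. S \<omega> \<in> {0, 1}"
    and "A \<in> measurable M (count_space UNIV)" and "\<forall>\<omega>\<in>space M. A \<omega> \<in> {1..J}"
    and "XP \<in> measurable M MP" and "XS \<in> measurable M MS"
    and "j \<in> {1..J}"
    and "measure M {\<omega>\<in>space M. A \<omega> = j} > 0"
    \<comment> \<open>Sampling ignorability (a): Y independent of S given (XP, A)\<close>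
    and "cond_indep_on M (space M)
           (sigma_gen M (\<lambda>\<omega>. (XP \<omega>, A \<omega>)) (MP \<Otimes>\<^sub>M count_space UNIV))
           (sigma_gen M Y borel) (sigma_gen M S (count_space UNIV))"
    \<comment> \<open>Sampling ignorability (b): positivity\<close>
    and "AE \<omega> in M.
           0 < cond_prob M (sigma_gen M (\<lambda>\<omega>. (XP \<omega>, A \<omega>)) (MP \<Otimes>\<^sub>M count_space UNIV))
                 {\<omega>\<in>space M. S \<omega> = 1} \<omega> \<and>
           cond_prob M (sigma_gen M (\<lambda>\<omega>. (XP \<omega>, A \<omega>)) (MP \<Otimes>\<^sub>M count_space UNIV))
                 {\<omega>\<in>space M. S \<omega> = 1} \<omega> < 1"
    \<comment> \<open>Area ignorability (a): Y independent of A given (XP, XS), on S = 1\<close>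
    and "cond_indep_on M {\<omega>\<in>space M. S \<omega> = 1}
           (sigma_gen M (\<lambda>\<omega>. (XP \<omega>, XS \<omega>, S \<omega>)) (MP \<Otimes>\<^sub>M MS \<Otimes>\<^sub>M count_space UNIV))
           (sigma_gen M Y borel) (sigma_gen M A (count_space UNIV))"
    \<comment> \<open>Area ignorability (b): positivity on S = 1\<close>
    and "AE \<omega> in M. S \<omega> = 1 \<longrightarrow>
           0 < cond_prob M (sigma_gen M (\<lambda>\<omega>. (XP \<omega>, XS \<omega>, S \<omega>)) (MP \<Otimes>\<^sub>M MS \<Otimes>\<^sub>M count_space UNIV))
                 {\<omega>\<in>space M. A \<omega> = j} \<omega> \<and>
           cond_prob M (sigma_gen M (\<lambda>\<omega>. (XP \<omega>, XS \<omega>, S \<omega>)) (MP \<Otimes>\<^sub>M MS \<Otimes>\<^sub>M count_space UNIV))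
                 {\<omega>\<in>space M. A \<omega> = j} \<omega> < 1"
  shows "event_mean M Y {\<omega>\<in>space M. A \<omega> = j} =
    (\<integral>\<omega>. indicator {\<omega>\<in>space M. S \<omega> = 1} \<omega> / measure M {\<omega>\<in>space M. A \<omega> = j}
        * (cond_prob M (sigma_gen M (\<lambda>\<omega>. (XP \<omega>, XS \<omega>, S \<omega>)) (MP \<Otimes>\<^sub>M MS \<Otimes>\<^sub>M count_space UNIV))
               {\<omega>\<in>space M. A \<omega> = j} \<omega>
           / cond_prob M (sigma_gen M (\<lambda>\<omega>. (XP \<omega>, S \<omega>)) (MP \<Otimes>\<^sub>M count_space UNIV))
               {\<omega>\<in>space M. A \<omega> = j} \<omega>)
        * (cond_prob M (sigma_gen M XP MP) {\<omega>\<in>space M. A \<omega> = j} \<omega>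
           / cond_prob M (sigma_gen M XP MP) {\<omega>\<in>space M. S \<omega> = 1} \<omega>)
        * Y \<omega> \<partial>M)"
proof -
  note P = assms(1)
  interpret prob_space M by fact
  have Ym[measurable]: "Y \<in> borel_measurable M" by fact
  have Sm[measurable]: "S \<in> measurable M (count_space UNIV)" by fact
  have Am[measurable]: "A \<in> measurable M (count_space UNIV)" by fact
  have XPm[measurable]: "XP \<in> measurable M MP" by fact
  have XSm[measurable]: "XS \<in> measurable M MS" by fact
  define a where "a = {\<omega>\<in>space M. A \<omega> = j}"
  define s where "s = {\<omega>\<in>space M. S \<omega> = 1}"
  define F0 where "F0 = sigma_gen M XP MP"
  define F1 where "F1 = sigma_gen M (\<lambda>\<omega>. (XP \<omega>, A \<omega>)) (MP \<Otimes>\<^sub>M count_space UNIV)"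
  define F2 where "F2 = sigma_gen M (\<lambda>\<omega>. (XP \<omega>, XS \<omega>, S \<omega>)) (MP \<Otimes>\<^sub>M MS \<Otimes>\<^sub>M count_space UNIV)"
  define F3 where "F3 = sigma_gen M (\<lambda>\<omega>. (XP \<omega>, S \<omega>)) (MP \<Otimes>\<^sub>M count_space UNIV)"
  have aM[measurable]: "a \<in> sets M" unfolding a_def by measurable
  have sM[measurable]: "s \<in> sets M" unfolding s_def by measurable
  have W1: "(\<lambda>\<omega>. (XP \<omega>, A \<omega>)) \<in> measurable M (MP \<Otimes>\<^sub>M count_space UNIV)" by measurable
  have W2: "(\<lambda>\<omega>. (XP \<omega>, XS \<omega>, S \<omega>)) \<in> measurable M (MP \<Otimes>\<^sub>M MS \<Otimes>\<^sub>M count_space UNIV)" by measurable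
  have W3: "(\<lambda>\<omega>. (XP \<omega>, S \<omega>)) \<in> measurable M (MP \<Otimes>\<^sub>M count_space UNIV)" by measurable
  have sF0: "sigma_finite_subalgebra M F0" unfolding F0_def by (rule sfs_gen[OF P XPm])
  have sF1: "sigma_finite_subalgebra M F1" unfolding F1_def by (rule sfs_gen[OF P W1])
  have sF2: "sigma_finite_subalgebra M F2" unfolding F2_def by (rule sfs_gen[OF P W2])
  have sF3: "sigma_finite_subalgebra M F3" unfolding F3_def by (rule sfs_gen[OF P W3])
  have "(\<lambda>\<omega>. snd (XP \<omega>, A \<omega>)) \<in> measurable F1 (count_space UNIV)"
    unfolding F1_def by (rule meas_gen[OF W1]) simp
  then have AF1[measurable]: "A \<in> measurable F1 (count_space UNIV)" by simp
  have aF1[measurable]: "a \<in> sets F1"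
  proof -
    have "{\<omega>\<in>space F1. A \<omega> = j} \<in> sets F1" by measurable
    then show ?thesis by (simp add: a_def F1_def)
  qed
  have "(\<lambda>\<omega>. snd (snd (XP \<omega>, XS \<omega>, S \<omega>))) \<in> measurable F2 (count_space UNIV)"
    unfolding F2_def by (rule meas_gen[OF W2]) simp
  then have SF2[measurable]: "S \<in> measurable F2 (count_space UNIV)" by simp
  have sF2'[measurable]: "s \<in> sets F2"
  proof -
    have "{\<omega>\<in>space F2. S \<omega> = 1} \<in> sets F2" by measurable
    then show ?thesis by (simp add: s_def F2_def)
  qed
  have "(\<lambda>\<omega>. fst (XP \<omega>, XS \<omega>, S \<omega>)) \<in> measurable F2 MP"
    unfolding F2_def by (rule meas_gen[OF W2]) simp
  then have XPF2: "XP \<in> measurable F2 MP" by simp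
  have subF20: "subalgebra F2 F0" unfolding F0_def by (rule sub_gen[OF XPF2]) (simp add: F2_def)
  have F0to2: "f \<in> borel_measurable F2" if "f \<in> borel_measurable F0" for f :: "'a \<Rightarrow> real"
    by (rule measurable_from_subalg[OF subF20 that])
  define \<pi>1 where "\<pi>1 = cond_prob M F1 s"
  define e2 where "e2 = cond_prob M F2 a"
  define e3 where "e3 = cond_prob M F3 a"
  define p0 where "p0 = cond_prob M F0 a"
  define q0 where "q0 = cond_prob M F0 s"
  define \<rho> where "\<rho> = cond_prob M F0 (s \<inter> a)"
  have [measurable]: "\<pi>1 \<in> borel_measurable F1" "e2 \<in> borel_measurable F2"
    "p0 \<in> borel_measurable F2" "\<rho> \<in> borel_measurable F2"
    unfolding \<pi>1_def e2_def p0_def \<rho>_def by (auto intro: F0to2 cp_meas)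
  have [measurable]: "\<pi>1 \<in> borel_measurable M" "e2 \<in> borel_measurable M" "e3 \<in> borel_measurable M"
    "p0 \<in> borel_measurable M" "q0 \<in> borel_measurable M" "\<rho> \<in> borel_measurable M"
    unfolding \<pi>1_def e2_def e3_def p0_def q0_def \<rho>_def by (auto intro: cp_meas2)
  have saa: "s \<inter> a \<in> sets M" by auto
  have mono1: "AE x in M. 0 \<le> \<rho> x \<and> \<rho> x \<le> q0 x"
    unfolding \<rho>_def q0_def by (rule cp_mono[OF P sF0 saa sM]) auto
  have mono2: "AE x in M. 0 \<le> p0 x \<and> p0 x \<le> p0 x"
    unfolding p0_def by (rule cp_mono[OF P sF0 aM aM]) auto
  have mono3: "AE x in M. 0 \<le> e2 x \<and> e2 x \<le> e2 x"
    unfolding e2_def by (rule cp_mono[OF P sF2 aM aM]) auto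
  have mono4: "AE x in M. 0 \<le> e3 x \<and> e3 x \<le> e3 x"
    unfolding e3_def by (rule cp_mono[OF P sF3 aM aM]) auto
  have r1: "AE \<omega> in M. \<omega> \<in> a \<longrightarrow> \<pi>1 \<omega> = \<rho> \<omega> / p0 \<omega>"
    using restr[OF P XPm Am sM, of j] unfolding \<pi>1_def \<rho>_def p0_def a_def F1_def F0_def .
  have r3: "AE \<omega> in M. \<omega> \<in> s \<longrightarrow> e3 \<omega> = \<rho> \<omega> / q0 \<omega>"
  proof -
    have "a \<inter> s = s \<inter> a" by blast
    then show ?thesis
      using restr[OF P XPm Sm aM, of 1] unfolding e3_def \<rho>_def q0_def s_def F3_def F0_def by simp
  qed
  have pos: "AE \<omega> in M. 0 < \<pi>1 \<omega>"
    using assms(13) unfolding \<pi>1_def F1_def s_def by auto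
  have ci1: "AE \<omega> in M. cond_prob M F1 (E \<inter> s) \<omega> = cond_prob M F1 E \<omega> * \<pi>1 \<omega>"
    if "E \<in> sets (sigma_gen M Y borel)" for E
  proof -
    have "s = S -` {1} \<inter> space M" by (auto simp: s_def)
    moreover have "S -` {1} \<inter> space M \<in> sets (sigma_gen M S (count_space UNIV))"
      unfolding sigma_gen_def by (rule in_vimage_algebra) simp
    ultimately show ?thesis using assms(12) that unfolding cond_indep_on_def \<pi>1_def F1_def by auto
  qed
  have ci2: "AE \<omega> in M. \<omega> \<in> s \<longrightarrow> cond_prob M F2 (E \<inter> a) \<omega> = cond_prob M F2 E \<omega> * e2 \<omega>"
    if "E \<in> sets (sigma_gen M Y borel)" for E
  proof -
    have "a = A -` {j} \<inter> space M" by (auto simp: a_def)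
    moreover have "A -` {j} \<inter> space M \<in> sets (sigma_gen M A (count_space UNIV))"
      unfolding sigma_gen_def by (rule in_vimage_algebra) simp
    ultimately show ?thesis using assms(14) that unfolding cond_indep_on_def e2_def F2_def s_def by auto
  qed
  define w where "w = (\<lambda>x. indicator s x * (e2 x / e3 x) * (p0 x / q0 x) :: real)"
  have wm[measurable]: "w \<in> borel_measurable M" unfolding w_def by measurable
  have wp: "AE x in M. 0 \<le> w x"
    using mono1 mono2 mono3 mono4 by eventually_elim (auto simp: w_def)
  have main: "(\<integral>\<^sup>+ x. ennreal (indicator a x * indicator E x) \<partial>M) = (\<integral>\<^sup>+ x. ennreal (w x * indicator E x) \<partial>M)"
    if EY: "E \<in> sets (sigma_gen M Y borel)" for E
  proof -
    have "subalgebra M (sigma_gen M Y borel)" by (rule sub_gen[OF Ym refl])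
    then have EM[measurable]: "E \<in> sets M" using EY by (auto simp: subalgebra_def)
    have EsM: "E \<inter> s \<in> sets M" and EaM: "E \<inter> a \<in> sets M" by auto
    have ia1: "indicator a \<in> borel_measurable F1" by measurable
    have h2: "(\<lambda>x. indicator a x / \<pi>1 x) \<in> borel_measurable F1" by measurable
    have h3: "(\<lambda>x. indicator s x * (p0 x / \<rho> x) * e2 x) \<in> borel_measurable F2" by measurable
    have h4: "(\<lambda>x. indicator s x * (p0 x / \<rho> x)) \<in> borel_measurable F2" by measurable
    have "(\<integral>\<^sup>+ x. ennreal (indicator a x * indicator E x) \<partial>M)
        = (\<integral>\<^sup>+ x. ennreal (indicator a x * cond_prob M F1 E x) \<partial>M)"
      by (rule key_nn[OF P sF1 EM ia1, symmetric]) auto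
    also have "\<dots> = (\<integral>\<^sup>+ x. ennreal ((indicator a x / \<pi>1 x) * cond_prob M F1 (E \<inter> s) x) \<partial>M)"
      by (rule cong_real) (use pos ci1[OF EY] in \<open>eventually_elim, auto\<close>)
    also have "\<dots> = (\<integral>\<^sup>+ x. ennreal ((indicator a x / \<pi>1 x) * indicator (E \<inter> s) x) \<partial>M)"
      by (rule key_nn[OF P sF1 EsM h2]) (use pos in \<open>eventually_elim, auto\<close>)
    also have "\<dots> = (\<integral>\<^sup>+ x. ennreal (indicator s x * (p0 x / \<rho> x) * indicator (E \<inter> a) x) \<partial>M)"
      by (rule cong_real) (use r1 in \<open>eventually_elim, auto simp: indicator_def\<close>)
    finally have L: "(\<integral>\<^sup>+ x. ennreal (indicator a x * indicator E x) \<partial>M)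
        = (\<integral>\<^sup>+ x. ennreal (indicator s x * (p0 x / \<rho> x) * indicator (E \<inter> a) x) \<partial>M)" .
    have "(\<integral>\<^sup>+ x. ennreal (w x * indicator E x) \<partial>M)
        = (\<integral>\<^sup>+ x. ennreal ((indicator s x * (p0 x / \<rho> x) * e2 x) * indicator E x) \<partial>M)"
      by (rule cong_real) (use r3 mono1 in \<open>eventually_elim, auto simp: w_def indicator_def alg1\<close>)
    also have "\<dots> = (\<integral>\<^sup>+ x. ennreal ((indicator s x * (p0 x / \<rho> x) * e2 x) * cond_prob M F2 E x) \<partial>M)"
      by (rule key_nn[OF P sF2 EM h3, symmetric])
        (use mono1 mono2 mono3 in \<open>eventually_elim, auto\<close>)
    also have "\<dots> = (\<integral>\<^sup>+ x. ennreal ((indicator s x * (p0 x / \<rho> x)) * cond_prob M F2 (E \<inter> a) x) \<partial>M)"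
      by (rule cong_real) (use ci2[OF EY] in \<open>eventually_elim, auto simp: indicator_def\<close>)
    also have "\<dots> = (\<integral>\<^sup>+ x. ennreal ((indicator s x * (p0 x / \<rho> x)) * indicator (E \<inter> a) x) \<partial>M)"
      by (rule key_nn[OF P sF2 EaM h4]) (use mono1 mono2 in \<open>eventually_elim, auto\<close>)
    finally show ?thesis using L by simp
  qed
  have "(\<integral>x. indicator a x * Y x \<partial>M) = (\<integral>x. w x * Y x \<partial>M)"
  proof (rule final_step[OF Ym _ wm _ wp])
    fix B :: "real set" assume "B \<in> sets borel"
    then have "Y -` B \<inter> space M \<in> sets (sigma_gen M Y borel)"
      unfolding sigma_gen_def by (rule in_vimage_algebra)
    then show "(\<integral>\<^sup>+ x. ennreal (indicator a x * indicator (Y -` B \<inter> space M) x) \<partial>M) =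
          (\<integral>\<^sup>+ x. ennreal (w x * indicator (Y -` B \<inter> space M) x) \<partial>M)" by (rule main)
  qed auto
  moreover have "(\<integral>\<omega>. indicator s \<omega> / measure M a * (e2 \<omega> / e3 \<omega>) * (p0 \<omega> / q0 \<omega>) * Y \<omega> \<partial>M)
      = (\<integral>\<omega>. (w \<omega> * Y \<omega>) / measure M a \<partial>M)"
    by (rule Bochner_Integration.integral_cong) (auto simp: w_def)
  moreover have "(\<integral>\<omega>. (w \<omega> * Y \<omega>) / measure M a \<partial>M) = (\<integral>\<omega>. w \<omega> * Y \<omega> \<partial>M) / measure M a"
    by (rule integral_divide_zero)
  ultimately show ?thesis
    unfolding event_mean_def a_def[symmetric] s_def[symmetric] F0_def[symmetric] F2_def[symmetric] F3_def[symmetric]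
      e2_def[symmetric] e3_def[symmetric] p0_def[symmetric] q0_def[symmetric]
    by simp
qed

end
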